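(* Let $n_1,\dots,n_m$ be positive integers, $n=n_1+\cdots+n_m$, let $\tau$ be a smooth $k$-representation of $M'=M'_{n_1,\dots,n_m}$ on a space $E$, and let $\theta$ be a non-degenerate character of $U=U_{n_1}\times\cdots\times U_{n_m}$. Then $\tau^{(n)}_{\theta}\neq0$ if and only if $\mathrm{Hom}_{k[U]}(\tau,\theta)\neq0$; in particular, this is equivalent to the $(U,\theta)$-coinvariants $E/\langle\tau(u)a-\theta(u)a: u\in U,a\in E\rangle$ of $\tau$ being non-zero.
   Context: $F$ is a non-archimedean locally compact field of residual characteristic $p$, $k$ an algebraically closed field of characteristic $\ell\neq p$. $M_{n_1,\dots,n_m}=\mathrm{GL}_{n_1}(F)\times\cdots\times\mathrm{GL}_{n_m}(F)$ embedded block-diagonally in $\mathrm{GL}_n(F)$, and $M'_{n_1,\dots,n_m}=M_{n_1,\dots,n_m}\cap\mathrm{SL}_n(F)$. $U_{n_i}$ is the upper unitriangular subgroup of $\mathrm{GL}_{n_i}(F)$, and $\theta:U\to k^\times$ is a smooth character trivial on $[U,U]$ and nontrivial on each simple root subgroup. Derivative: for $1\le s\le m$ and $2\le j\le n_s$ let $N_{s,j}\subset U$ be the subgroup of elements equal to the identity in all blocks except block $s$, where the entry is an upper unitriangular matrix whose only possibly nonzero off-diagonal entries are in column $j$, rows $1,\dots,j-1$. List these groups as $N_{m,n_m},N_{m,n_m-1},\dots,N_{m,2},N_{m-1,n_{m-1}},\dots,N_{1,2}$. Put $E_0=E$ and let $E_t$ be the quotient of $E_{t-1}$ by the span of $g a-\theta(g)a$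 for $g$ in the $t$-th group of the list and $a\in E_{t-1}$ (each $E_{t-1}$ is naturally acted on by the later groups of the list). The last quotient, a $k$-vector space, is the $n$-th derivative $\tau^{(n)}_\theta$ (denoted $\tau^{(n_1+\cdots+n_m)}_{\theta,m}$ in the paper). *)

theory Defs
  imports "Jordan_Normal_Form.Determinant" "HOL-Computational_Algebra.Polynomial"
begin

definition nonarch_local_field :: "('f::field \<Rightarrow> real) \<Rightarrow> nat \<Rightarrow> bool" where
  "nonarch_local_field absv p \<longleftrightarrow>
     (\<forall>x. absv x \<ge> 0) \<and> (\<forall>x. absv x = 0 \<longleftrightarrow> x = 0) \<and>
     (\<forall>x y. absv (x * y) = absv x * absv y) \<and>
     (\<forall>x y. absv (x + y) \<le> max (absv x) (absv y)) \<and>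
     (\<exists>x. absv x \<noteq> 0 \<and> absv x \<noteq> 1) \<and>
     \<comment> \<open>local compactness: the closed unit ball is sequentially compact\<close>
     (\<forall>X :: nat \<Rightarrow> 'f. (\<forall>i. absv (X i) \<le> 1) \<longrightarrow>
        (\<exists>r L. strict_mono r \<and> (\<lambda>i. absv (X (r i) - L)) \<longlonglongrightarrow> 0)) \<and>
     \<comment> \<open>residual characteristic p\<close>
     prime p \<and> absv (of_nat p) < 1"

definition alg_closed_field :: "'k::field itself \<Rightarrow> bool" where
  "alg_closed_field _ \<longleftrightarrow> (\<forall>q :: 'k poly. degree q > 0 \<longrightarrow> (\<exists>x. poly q x = 0))"

text \<open>Blocks are numbered 0..m-1; block s occupies the indices
  offs ns s ..< offs ns s + ns!s (0-based).\<close>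

definition offs :: "nat list \<Rightarrow> nat \<Rightarrow> nat" where
  "offs ns s = sum_list (take s ns)"

definition blk :: "nat list \<Rightarrow> nat \<Rightarrow> nat" where
  "blk ns i = (LEAST s. i < offs ns (Suc s))"

definition block_diag :: "nat list \<Rightarrow> 'f::field mat \<Rightarrow> bool" where
  "block_diag ns A \<longleftrightarrow> A \<in> carrier_mat (sum_list ns) (sum_list ns) \<and>
     (\<forall>i < sum_list ns. \<forall>j < sum_list ns. blk ns i \<noteq> blk ns j \<longrightarrow> A $$ (i, j) = 0)"

definition Mprime :: "nat list \<Rightarrow> 'f::field mat set" where
  "Mprime ns = {A. block_diag ns A \<and> det A = 1}"

definition Ugrp :: "nat list \<Rightarrow> 'f::field mat set" where
  "Ugrp ns = {A. block_diag ns A \<and>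
     (\<forall>i < sum_list ns. A $$ (i, i) = 1) \<and>
     (\<forall>i < sum_list ns. \<forall>j < i. A $$ (i, j) = 0)}"

definition elem_mat :: "nat \<Rightarrow> nat \<Rightarrow> nat \<Rightarrow> 'f::field \<Rightarrow> 'f mat" where
  "elem_mat n a b x = mat n n (\<lambda>(i, j). if i = j then 1 else if i = a \<and> j = b then x else 0)"

text \<open>N_{s,j} (paper's 1-based j with 2 \<le> j \<le> n_s) corresponds here to 0-based block s
  and 0-based column c = j - 1 with 1 \<le> c < n_s: the matrices equal to the identity
  except possibly in column offs s + c, rows offs s ..< offs s + c.\<close>
definition Ngrp :: "nat list \<Rightarrow> nat \<Rightarrow> nat \<Rightarrow> 'f::field mat set" where
  "Ngrp ns s c = {A. A \<in> carrier_mat (sum_list ns) (sum_list ns) \<and>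
     (\<forall>a < sum_list ns. \<forall>b < sum_list ns.
        A $$ (a, b) \<noteq> (1\<^sub>m (sum_list ns)) $$ (a, b) \<longrightarrow>
          (b = offs ns s + c \<and> offs ns s \<le> a \<and> a < offs ns s + c))}"

definition Nlist :: "nat list \<Rightarrow> 'f::field mat set list" where
  "Nlist ns = concat (map (\<lambda>s. map (\<lambda>c. Ngrp ns s c) (rev [1..<ns ! s])) (rev [0..<length ns]))"

definition near_one :: "('f::field \<Rightarrow> real) \<Rightarrow> nat \<Rightarrow> real \<Rightarrow> 'f mat \<Rightarrow> bool" where
  "near_one absv n r g \<longleftrightarrow> (\<forall>i < n. \<forall>j < n. absv (g $$ (i, j) - (1\<^sub>m n) $$ (i, j)) < r)"

definition smooth_rep ::
  "('f::field \<Rightarrow> real) \<Rightarrow> nat list \<Rightarrow> ('k::field \<Rightarrow> 'e::ab_group_add \<Rightarrow> 'e) \<Rightarrow> ('f mat \<Rightarrow> 'e \<Rightarrow> 'e) \<Rightarrow> bool" where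
  "smooth_rep absv ns smul rho \<longleftrightarrow>
     vector_space smul \<and>
     (\<forall>g \<in> Mprime ns. Vector_Spaces.linear smul smul (rho g)) \<and>
     rho (1\<^sub>m (sum_list ns)) = id \<and>
     (\<forall>g \<in> Mprime ns. \<forall>h \<in> Mprime ns. rho (g * h) = rho g \<circ> rho h) \<and>
     (\<forall>a. \<exists>r > 0. \<forall>g \<in> Mprime ns. near_one absv (sum_list ns) r g \<longrightarrow> rho g a = a)"

definition smooth_char_U :: "('f::field \<Rightarrow> real) \<Rightarrow> nat list \<Rightarrow> ('f mat \<Rightarrow> 'k::field) \<Rightarrow> bool" where
  "smooth_char_U absv ns \<theta> \<longleftrightarrow>
     (\<forall>u \<in> Ugrp ns. \<theta> u \<noteq> 0) \<and>
     (\<forall>u \<in> Ugrp ns. \<forall>v \<in> Ugrp ns. \<theta> (u * v) = \<theta> u * \<theta> v) \<and>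
     (\<exists>r > 0. \<forall>u \<in> Ugrp ns. near_one absv (sum_list ns) r u \<longrightarrow> \<theta> u = 1)"

definition nondegenerate :: "nat list \<Rightarrow> ('f::field mat \<Rightarrow> 'k::field) \<Rightarrow> bool" where
  "nondegenerate ns \<theta> \<longleftrightarrow>
     (\<forall>s < length ns. \<forall>i. i + 1 < ns ! s \<longrightarrow>
        (\<exists>x. \<theta> (elem_mat (sum_list ns) (offs ns s + i) (offs ns s + i + 1) x) \<noteq> 1))"

text \<open>Iterated quotients: E_t = E / K_t, where K_t is the kernel of E \<rightarrow> E_t.  Since every element
  of E_{t-1} is the class of some a \<in> E and g acts on classes by g[a] = [g a], the kernel of
  E \<rightarrow> E_t is K_{t-1} + span{g a - \<theta>(g) a : g \<in> t-th group, a \<in> E}.\<close>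
fun deriv_kernel :: "('k::field \<Rightarrow> 'e::ab_group_add \<Rightarrow> 'e) \<Rightarrow> ('f mat \<Rightarrow> 'e \<Rightarrow> 'e) \<Rightarrow> ('f mat \<Rightarrow> 'k)
     \<Rightarrow> 'e set \<Rightarrow> 'f mat set list \<Rightarrow> 'e set" where
  "deriv_kernel smul rho \<theta> K [] = K"
| "deriv_kernel smul rho \<theta> K (G # Gs) =
     deriv_kernel smul rho \<theta> (module.span smul (K \<union> {rho g a - smul (\<theta> g) a | g a. g \<in> G})) Gs"

definition derivative_nonzero :: "nat list \<Rightarrow> ('k::field \<Rightarrow> 'e::ab_group_add \<Rightarrow> 'e) \<Rightarrow> ('f::field mat \<Rightarrow> 'e \<Rightarrow> 'e)
     \<Rightarrow> ('f mat \<Rightarrow> 'k) \<Rightarrow> bool" where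
  "derivative_nonzero ns smul rho \<theta> \<longleftrightarrow> deriv_kernel smul rho \<theta> {0} (Nlist ns) \<noteq> UNIV"

definition hom_U_nonzero :: "nat list \<Rightarrow> ('k::field \<Rightarrow> 'e::ab_group_add \<Rightarrow> 'e) \<Rightarrow> ('f::field mat \<Rightarrow> 'e \<Rightarrow> 'e)
     \<Rightarrow> ('f mat \<Rightarrow> 'k) \<Rightarrow> bool" where
  "hom_U_nonzero ns smul rho \<theta> \<longleftrightarrow>
     (\<exists>phi. Vector_Spaces.linear smul ((*) :: 'k \<Rightarrow> 'k \<Rightarrow> 'k) phi \<and>
          (\<forall>u \<in> Ugrp ns. \<forall>a. phi (rho u a) = \<theta> u * phi a) \<and> phi \<noteq> (\<lambda>_. 0))"

definition coinvariants_nonzero :: "nat list \<Rightarrow> ('k::field \<Rightarrow> 'e::ab_group_add \<Rightarrow> 'e) \<Rightarrow> ('f::field mat \<Rightarrow> 'e \<Rightarrow> 'e)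
     \<Rightarrow> ('f mat \<Rightarrow> 'k) \<Rightarrow> bool" where
  "coinvariants_nonzero ns smul rho \<theta> \<longleftrightarrow>
     module.span smul {rho u a - smul (\<theta> u) a | u a. u \<in> Ugrp ns} \<noteq> UNIV"

end

theory Submission
  imports Defs
begin


lemma offs_Suc: "s < length ns \<Longrightarrow> offs ns (Suc s) = offs ns s + ns ! s"
  by (simp add: offs_def take_Suc_conv_app_nth)

lemma offs_mono: "s \<le> t \<Longrightarrow> offs ns s \<le> offs ns t"
proof -
  assume "s \<le> t"
  then obtain d where "t = s + d" by (metis le_add_diff_inverse)
  then show ?thesis
    by (simp add: offs_def take_add)
qed

lemma offs_len: "offs ns (length ns) = sum_list ns"
  by (simp add: offs_def)

lemma blk_eq: assumes "s < length ns" "offs ns s \<le> i" "i < offs ns (Suc s)"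
  shows "blk ns i = s"
  unfolding blk_def
proof (rule Least_equality)
  show "i < offs ns (Suc s)" by fact
  fix y assume "i < offs ns (Suc y)"
  show "s \<le> y"
  proof (rule ccontr)
    assume "\<not> s \<le> y"
    hence "Suc y \<le> s" by simp
    hence "offs ns (Suc y) \<le> offs ns s" by (rule offs_mono)
    thus False using assms \<open>i < offs ns (Suc y)\<close> by simp
  qed
qed

lemma blk_props: assumes "i < sum_list ns"
  shows "blk ns i < length ns \<and> offs ns (blk ns i) \<le> i \<and> i < offs ns (blk ns i) + ns ! (blk ns i)"
proof -
  have ne: "ns \<noteq> []" using assms by auto
  have L: "i < offs ns (Suc (length ns - 1))" using ne assms offs_len[of ns] by simp
  have b1: "i < offs ns (Suc (blk ns i))" unfolding blk_def by (rule LeastI[where P="\<lambda>s. i < offs ns (Suc s)", OF L])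
  have b2: "blk ns i \<le> length ns - 1" unfolding blk_def by (rule Least_le[where P="\<lambda>s. i < offs ns (Suc s)", OF L])
  hence bl: "blk ns i < length ns" using ne by (cases ns) auto
  have b3: "offs ns (blk ns i) \<le> i"
  proof (cases "blk ns i")
    case 0 then show ?thesis by (simp add: offs_def)
  next
    case (Suc t)
    have "t < blk ns i" using Suc by simp
    hence "\<not> i < offs ns (Suc t)" unfolding blk_def by (rule not_less_Least)
    thus ?thesis using Suc by simp
  qed
  show ?thesis using b1 b3 bl offs_Suc[OF bl] by simp
qed

lemma Nlist_mem: "G \<in> set (Nlist ns) \<longleftrightarrow> (\<exists>s c. s < length ns \<and> 1 \<le> c \<and> c < ns ! s \<and> G = Ngrp ns s c)"
  unfolding Nlist_def by fastforce

lemma vs_field: "vector_space ((*) :: 'k::field \<Rightarrow> 'k \<Rightarrow> 'k)"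
  by unfold_locales (simp_all add: algebra_simps)



lemma Ngrp_sub_U:
  assumes s: "s < length ns" and c: "1 \<le> c" "c < ns ! s" and A: "A \<in> Ngrp ns s c"
  shows "A \<in> Ugrp ns"
proof -
  let ?n = "sum_list ns"
  have Ac: "A \<in> carrier_mat ?n ?n" and
    Ad: "\<And>a b. a < ?n \<Longrightarrow> b < ?n \<Longrightarrow> A $$ (a, b) \<noteq> (1\<^sub>m ?n) $$ (a, b) \<Longrightarrow>
          b = offs ns s + c \<and> offs ns s \<le> a \<and> a < offs ns s + c"
    using A unfolding Ngrp_def by auto
  have up: "offs ns s + ns ! s = offs ns (Suc s)" using offs_Suc[OF s] by simp
  have bd: "A $$ (a, b) = 0" if "a < ?n" "b < ?n" "blk ns a \<noteq> blk ns b" for a b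
  proof (rule ccontr)
    assume nz: "A $$ (a, b) \<noteq> 0"
    have ab: "a \<noteq> b" using that by auto
    hence "A $$ (a, b) \<noteq> (1\<^sub>m ?n) $$ (a, b)" using nz that by simp
    from Ad[OF that(1,2) this] have h: "b = offs ns s + c" "offs ns s \<le> a" "a < offs ns s + c" by auto
    have "blk ns a = s" by (rule blk_eq[OF s]) (use h c up in auto)
    moreover have "blk ns b = s" by (rule blk_eq[OF s]) (use h c up in auto)
    ultimately show False using that by simp
  qed
  have diag: "A $$ (i, i) = 1" if "i < ?n" for i
  proof (rule ccontr)
    assume "A $$ (i, i) \<noteq> 1"
    hence "A $$ (i, i) \<noteq> (1\<^sub>m ?n) $$ (i, i)" using that by simp
    from Ad[OF that that this] show False by auto
  qed
  have low: "A $$ (i, j) = 0" if "i < ?n" "j < i" for i j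
  proof (rule ccontr)
    assume "A $$ (i, j) \<noteq> 0"
    hence "A $$ (i, j) \<noteq> (1\<^sub>m ?n) $$ (i, j)" using that by simp
    from Ad[OF that(1) _ this] that show False by auto
  qed
  show ?thesis unfolding Ugrp_def block_diag_def using Ac bd diag low by auto
qed

lemma U_sub_M: assumes "A \<in> Ugrp ns" shows "A \<in> Mprime ns"
proof -
  let ?n = "sum_list ns"
  have Ac: "A \<in> carrier_mat ?n ?n" and bd: "block_diag ns A"
    and d: "\<forall>i < ?n. A $$ (i, i) = 1" and l: "\<forall>i < ?n. \<forall>j < i. A $$ (i, j) = 0"
    using assms unfolding Ugrp_def block_diag_def by auto
  have ut: "upper_triangular A" unfolding upper_triangular_def using Ac l by auto
  have "diag_mat A = replicate ?n 1"
    using Ac d by (intro nth_equalityI) (auto simp: diag_mat_def)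
  hence "det A = 1" using det_upper_triangular[OF ut Ac] by simp
  thus ?thesis using bd unfolding Mprime_def by simp
qed

lemma sum_aux:
  fixes f :: "nat \<Rightarrow> 'a::field"
  assumes "i < n" "j < n"
  shows "(\<Sum>t\<in>{0..<n}. (if i = t then 1 else if t = j then c else 0) * f t) = f i + (if i = j then 0 else c * f j)"
proof -
  have "(\<Sum>t\<in>{0..<n}. (if i = t then 1 else if t = j then c else 0) * f t)
     = (\<Sum>t\<in>{0..<n}. (if t = i then f i else 0) + (if t = j then (if i = j then 0 else c * f j) else 0))"
    by (rule sum.cong) auto
  also have "\<dots> = f i + (if i = j then 0 else c * f j)"
    using assms by (simp add: sum.distrib)
  finally show ?thesis .
qed

definition triv_from :: "nat \<Rightarrow> nat \<Rightarrow> 'f::field mat \<Rightarrow> bool" where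
  "triv_from n k u \<longleftrightarrow> (\<forall>l. k \<le> l \<and> l < n \<longrightarrow> (\<forall>t < n. u $$ (t, l) = (if t = l then 1 else 0)))"

lemma decomp:
  fixes u :: "'f::field mat"
  assumes u: "u \<in> Ugrp ns" and j: "j < sum_list ns" and tr: "triv_from (sum_list ns) (Suc j) u"
  shows "\<exists>g u'. u = g * u' \<and> u' \<in> Ugrp ns \<and> triv_from (sum_list ns) j u' \<and> g \<in> Ugrp ns \<and>
           (g = 1\<^sub>m (sum_list ns) \<or> (\<exists>G \<in> set (Nlist ns). g \<in> G))"
proof -
  let ?n = "sum_list ns"
  have Uc: "u \<in> carrier_mat ?n ?n" and bd: "\<And>a b. a < ?n \<Longrightarrow> b < ?n \<Longrightarrow> blk ns a \<noteq> blk ns b \<Longrightarrow> u $$ (a, b) = 0"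
    and d: "\<And>i. i < ?n \<Longrightarrow> u $$ (i, i) = 1" and l: "\<And>i j. i < ?n \<Longrightarrow> j < i \<Longrightarrow> u $$ (i, j) = 0"
    using u unfolding Ugrp_def block_diag_def by auto
  define g :: "'f mat" where "g = mat ?n ?n (\<lambda>(a, b). if a = b then 1 else if b = j then u $$ (a, j) else 0)"
  define u' :: "'f mat" where "u' = mat ?n ?n (\<lambda>(a, b). if b = j then (if a = j then 1 else 0) else u $$ (a, b))"
  have prod: "u = g * u'"
  proof (rule eq_matI)
    show "dim_row u = dim_row (g * u')" "dim_col u = dim_col (g * u')" using Uc by (auto simp: g_def u'_def)
    fix i l assume i: "i < dim_row (g * u')" and ll: "l < dim_col (g * u')"
    hence i: "i < ?n" and ll: "l < ?n" by (auto simp: g_def u'_def)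
    have "(g * u') $$ (i, l) = (\<Sum>t\<in>{0..<?n}. g $$ (i, t) * u' $$ (t, l))"
      using i ll by (simp add: g_def u'_def scalar_prod_def)
    also have "\<dots> = (\<Sum>t\<in>{0..<?n}. (if i = t then 1 else if t = j then u $$ (i, j) else 0) * u' $$ (t, l))"
      by (rule sum.cong) (use i in \<open>auto simp: g_def\<close>)
    also have "\<dots> = u' $$ (i, l) + (if i = j then 0 else u $$ (i, j) * u' $$ (j, l))"
      by (rule sum_aux[OF i j])
    also have "\<dots> = u $$ (i, l)"
    proof (cases "l = j")
      case True then show ?thesis using i ll d[OF j] by (auto simp: u'_def)
    next
      case False
      have "u $$ (j, l) = 0"
      proof (cases "l < j")
        case True then show ?thesis using l[OF j] by simp
      next
        case False' : False
        hence "Suc j \<le> l" using False by simp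
        then show ?thesis using tr ll j False unfolding triv_from_def by auto
      qed
      then show ?thesis using False i ll j by (auto simp: u'_def)
    qed
    finally show "u $$ (i, l) = (g * u') $$ (i, l)" by simp
  qed
  have u'U: "u' \<in> Ugrp ns"
    unfolding Ugrp_def block_diag_def u'_def using bd d l by auto
  have u'tr: "triv_from ?n j u'"
    unfolding triv_from_def
  proof (intro allI impI)
    fix l t assume "j \<le> l \<and> l < ?n" "t < ?n"
    then show "u' $$ (t, l) = (if t = l then 1 else 0)"
    proof (cases "l = j")
      case True then show ?thesis using \<open>t < ?n\<close> \<open>j \<le> l \<and> l < ?n\<close> by (simp add: u'_def)
    next
      case False
      hence "Suc j \<le> l" using \<open>j \<le> l \<and> l < ?n\<close> by simp
      then have "u $$ (t, l) = (if t = l then 1 else 0)"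
        using tr \<open>t < ?n\<close> \<open>j \<le> l \<and> l < ?n\<close> unfolding triv_from_def by blast
      then show ?thesis using False \<open>t < ?n\<close> \<open>j \<le> l \<and> l < ?n\<close> by (simp add: u'_def)
    qed
  qed
  have gU: "g \<in> Ugrp ns"
    unfolding Ugrp_def block_diag_def g_def using bd l by auto
  have galt: "g = 1\<^sub>m ?n \<or> (\<exists>G \<in> set (Nlist ns). g \<in> G)"
  proof (cases "\<exists>i<j. u $$ (i, j) \<noteq> 0")
    case False
    have "g = 1\<^sub>m ?n"
    proof (rule eq_matI)
      fix a b assume "a < dim_row (1\<^sub>m ?n)" "b < dim_col (1\<^sub>m ?n)"
      then show "g $$ (a, b) = 1\<^sub>m ?n $$ (a, b)"
        using False l[of a j] by (cases "a < j") (auto simp: g_def)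
    qed (auto simp: g_def)
    then show ?thesis by simp
  next
    case True
    then obtain i where ij: "i < j" "u $$ (i, j) \<noteq> 0" by auto
    have i: "i < ?n" using ij j by simp
    have bij: "blk ns i = blk ns j" using bd[OF i j] ij by auto
    define s where "s = blk ns j"
    have sp: "s < length ns" "offs ns s \<le> j" "j < offs ns s + ns ! s" using blk_props[OF j] s_def by auto
    have "offs ns s \<le> i" using blk_props[OF i] bij s_def by auto
    define c where "c = j - offs ns s"
    have c: "1 \<le> c" "c < ns ! s" "j = offs ns s + c" using sp ij \<open>offs ns s \<le> i\<close> c_def by auto
    have "g \<in> Ngrp ns s c"
      unfolding Ngrp_def
    proof (intro CollectI conjI allI impI)
      show "g \<in> carrier_mat ?n ?n" by (simp add: g_def)
      fix a b assume ab: "a < ?n" "b < ?n" "g $$ (a, b) \<noteq> 1\<^sub>m ?n $$ (a, b)"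
      hence bj: "b = j" "a \<noteq> b" "u $$ (a, j) \<noteq> 0" by (auto simp: g_def split: if_splits)
      have "a < j" using l[OF ab(1), of j] bj by (cases "a < j") auto
      have "blk ns a = s" using bd[OF ab(1) j] bj s_def by auto
      hence "offs ns s \<le> a" using blk_props[OF ab(1)] by auto
      show "b = offs ns s + c" using bj c by simp
      show "offs ns s \<le> a" by fact
      show "a < offs ns s + c" using \<open>a < j\<close> c by simp
    qed
    moreover have "Ngrp ns s c \<in> set (Nlist ns)" using Nlist_mem sp c by blast
    ultimately show ?thesis by blast
  qed
  show ?thesis using prod u'U u'tr gU galt by blast
qed



lemma one_U: "1\<^sub>m (sum_list ns) \<in> Ugrp ns"
  unfolding Ugrp_def block_diag_def by auto

lemma triv0: assumes "u \<in> Ugrp ns" "triv_from (sum_list ns) 0 u" shows "u = 1\<^sub>m (sum_list ns)"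
proof (rule eq_matI)
  show "dim_row u = dim_row (1\<^sub>m (sum_list ns))" "dim_col u = dim_col (1\<^sub>m (sum_list ns))"
    using assms(1) unfolding Ugrp_def block_diag_def by auto
qed (use assms(2) in \<open>auto simp: triv_from_def\<close>)

lemma span_gen:
  fixes smul :: "'k::field \<Rightarrow> 'e::ab_group_add \<Rightarrow> 'e" and rho :: "'f::field mat \<Rightarrow> 'e \<Rightarrow> 'e"
  assumes vs: "vector_space smul"
    and rmul: "\<forall>g \<in> Mprime ns. \<forall>h \<in> Mprime ns. rho (g * h) = rho g \<circ> rho h"
    and rone: "rho (1\<^sub>m (sum_list ns)) = id"
    and tnz: "\<forall>u \<in> Ugrp ns. \<theta> u \<noteq> 0"
    and tmul: "\<forall>u \<in> Ugrp ns. \<forall>v \<in> Ugrp ns. \<theta> (u * v) = \<theta> u * \<theta> v"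
  shows "module.span smul {rho u a - smul (\<theta> u) a | u a. u \<in> Ugrp ns}
       = module.span smul {rho g a - smul (\<theta> g) a | g a. \<exists>G\<in>set (Nlist ns). g \<in> G}"
proof -
  interpret vector_space smul by fact
  let ?n = "sum_list ns"
  let ?N = "{rho g a - smul (\<theta> g) a | g a. \<exists>G\<in>set (Nlist ns). g \<in> G}"
  have t1: "\<theta> (1\<^sub>m ?n) = 1"
  proof -
    have "\<theta> (1\<^sub>m ?n) = \<theta> (1\<^sub>m ?n) * \<theta> (1\<^sub>m ?n)" using tmul one_U[of ns] by (metis left_mult_one_mat one_carrier_mat)
    thus ?thesis using tnz one_U[of ns] by (metis mult_cancel_left1)
  qed
  have main: "\<forall>u \<in> Ugrp ns. triv_from ?n k u \<longrightarrow> (\<forall>a. rho u a - smul (\<theta> u) a \<in> span ?N)" if "k \<le> ?n" for k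
    using that
  proof (induction k)
    case 0
    show ?case
    proof (intro ballI impI allI)
      fix u :: "'f mat" and a assume "u \<in> Ugrp ns" "triv_from ?n 0 u"
      hence "u = 1\<^sub>m ?n" by (rule triv0)
      thus "rho u a - smul (\<theta> u) a \<in> span ?N" using rone t1 by (simp add: span_zero)
    qed
  next
    case (Suc k)
    show ?case
    proof (intro ballI impI allI)
      fix u :: "'f mat" and a assume u: "u \<in> Ugrp ns" "triv_from ?n (Suc k) u"
      from decomp[OF u(1) _ u(2)] Suc.prems obtain g u' where
        d: "u = g * u'" "u' \<in> Ugrp ns" "triv_from ?n k u'" "g \<in> Ugrp ns"
           "g = 1\<^sub>m ?n \<or> (\<exists>G \<in> set (Nlist ns). g \<in> G)" by auto
      define b where "b = rho u' a"
      have IH: "rho u' a - smul (\<theta> u') a \<in> span ?N" using Suc.IH Suc.prems d by auto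
      have first: "rho g b - smul (\<theta> g) b \<in> span ?N"
      proof (cases "g = 1\<^sub>m ?n")
        case True then show ?thesis using rone t1 by (simp add: span_zero)
      next
        case False
        then have "rho g b - smul (\<theta> g) b \<in> ?N" using d(5) by blast
        then show ?thesis by (rule span_base)
      qed
      have eq: "rho u a - smul (\<theta> u) a = (rho g b - smul (\<theta> g) b) + smul (\<theta> g) (rho u' a - smul (\<theta> u') a)"
      proof -
        have "g \<in> Mprime ns" "u' \<in> Mprime ns" using U_sub_M d by auto
        hence "rho u a = rho g b" using rmul d(1) b_def by auto
        moreover have "\<theta> u = \<theta> g * \<theta> u'" using tmul d by auto
        ultimately show ?thesis unfolding b_def by (simp add: scale_right_diff_distrib)
      qed
      show "rho u a - smul (\<theta> u) a \<in> span ?N"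
        unfolding eq by (intro span_add first span_scale IH)
    qed
  qed
  have tr: "triv_from ?n ?n u" for u :: "'f mat" unfolding triv_from_def by auto
  have sub1: "{rho u a - smul (\<theta> u) a | u a. u \<in> Ugrp ns} \<subseteq> span ?N"
  proof
    fix x assume "x \<in> {rho u a - smul (\<theta> u) a | u a. u \<in> Ugrp ns}"
    then obtain u a where "x = rho u a - smul (\<theta> u) a" "u \<in> Ugrp ns" by blast
    then show "x \<in> span ?N" using main[of ?n] tr by blast
  qed
  have sub2: "?N \<subseteq> {rho u a - smul (\<theta> u) a | u a. u \<in> Ugrp ns}"
  proof
    fix x assume "x \<in> ?N"
    then obtain g a G where "x = rho g a - smul (\<theta> g) a" "G \<in> set (Nlist ns)" "g \<in> G" by blast
    moreover then have "g \<in> Ugrp ns" using Ngrp_sub_U Nlist_mem by metis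
    ultimately show "x \<in> {rho u a - smul (\<theta> u) a | u a. u \<in> Ugrp ns}" by blast
  qed
  show ?thesis
    using span_minimal[OF sub1 subspace_span] span_mono[OF sub2] by (simp add: span_span)
qed



lemma span_span_Un:
  assumes "vector_space smul"
  shows "module.span smul (module.span smul X \<union> Y) = module.span smul (X \<union> Y)"
proof -
  interpret vector_space smul by fact
  show ?thesis
  proof
    show "span (span X \<union> Y) \<subseteq> span (X \<union> Y)"
      by (intro span_minimal subspace_span) (use span_mono[of X "X \<union> Y"] span_superset[of "X \<union> Y"] in auto)
    show "span (X \<union> Y) \<subseteq> span (span X \<union> Y)"
      by (intro span_mono) (use span_superset[of X] in auto)
  qed
qed

lemma deriv_kernel_span:
  assumes vs: "vector_space smul" and K: "module.span smul K = K"
  shows "deriv_kernel smul rho \<theta> K Gs =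
     module.span smul (K \<union> {rho g a - smul (\<theta> g) a | g a. \<exists>G\<in>set Gs. g \<in> G})"
  using K
proof (induction Gs arbitrary: K)
  case Nil
  then show ?case by simp
next
  case (Cons G Gs)
  interpret vector_space smul by fact
  let ?A = "{rho g a - smul (\<theta> g) a | g a. g \<in> G}"
  let ?B = "{rho g a - smul (\<theta> g) a | g a. \<exists>G\<in>set Gs. g \<in> G}"
  have "deriv_kernel smul rho \<theta> K (G # Gs) = span (span (K \<union> ?A) \<union> ?B)"
    using Cons.IH[of "span (K \<union> ?A)"] by (simp add: span_span)
  also have "\<dots> = span (K \<union> ?A \<union> ?B)" by (rule span_span_Un[OF vs])
  also have "K \<union> ?A \<union> ?B = K \<union> {rho g a - smul (\<theta> g) a | g a. \<exists>G'\<in>set (G # Gs). g \<in> G'}"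
    by auto
  finally show ?case .
qed

lemma hom_iff:
  fixes smul :: "'k::field \<Rightarrow> 'e::ab_group_add \<Rightarrow> 'e" and rho :: "'f::field mat \<Rightarrow> 'e \<Rightarrow> 'e"
  assumes vs: "vector_space smul"
  shows "hom_U_nonzero ns smul rho \<theta> \<longleftrightarrow> coinvariants_nonzero ns smul rho \<theta>"
proof -
  interpret vector_space smul by fact
  interpret vs2: vector_space "(*) :: 'k \<Rightarrow> 'k \<Rightarrow> 'k" by (rule vs_field)
  interpret vp: vector_space_pair smul "(*) :: 'k \<Rightarrow> 'k \<Rightarrow> 'k" by unfold_locales
  let ?S = "{rho u a - smul (\<theta> u) a | u a. u \<in> Ugrp ns}"
  show ?thesis
    unfolding hom_U_nonzero_def coinvariants_nonzero_def
  proof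
    assume "\<exists>phi. Vector_Spaces.linear smul (*) phi \<and> (\<forall>u\<in>Ugrp ns. \<forall>a. phi (rho u a) = \<theta> u * phi a) \<and> phi \<noteq> (\<lambda>_. 0)"
    then obtain phi where lin: "Vector_Spaces.linear smul (*) phi"
      and eqv: "\<forall>u\<in>Ugrp ns. \<forall>a. phi (rho u a) = \<theta> u * phi a" and nz: "phi \<noteq> (\<lambda>_. 0)" by blast
    have z: "phi x = 0" if "x \<in> ?S" for x
      using that eqv vp.linear_diff[OF lin] vp.linear_scale[OF lin] by auto
    show "span ?S \<noteq> UNIV"
    proof
      assume "span ?S = UNIV"
      hence "phi x = 0" for x using vp.linear_eq_0_on_span[OF lin z] by blast
      thus False using nz by auto
    qed
  next
    assume "span ?S \<noteq> UNIV"
    then obtain x where x: "x \<notin> span ?S" by auto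
    obtain B where B: "B \<subseteq> span ?S" "independent B" "span ?S \<subseteq> span B"
      using maximal_independent_subset[of "span ?S"] by blast
    have "span B \<subseteq> span ?S" by (rule span_minimal[OF B(1) subspace_span])
    hence xB: "x \<notin> span B" using x by blast
    have ind: "independent (insert x B)" using independent_insertI[OF xB B(2)] .
    obtain phi where lin: "Vector_Spaces.linear smul (*) phi"
      and ph: "\<forall>y \<in> insert x B. phi y = (if y = x then 1 else 0)"
      using vp.linear_independent_extend[OF ind, of "\<lambda>y. if y = x then 1 else 0"] by blast
    have z: "phi y = 0" if "y \<in> span B" for y
    proof -
      have zB: "phi w = 0" if "w \<in> B" for w
      proof -
        have "w \<noteq> x" using xB that span_superset[of B] by blast
        thus ?thesis using ph that by simp
      qed
      show ?thesis by (rule vp.linear_eq_0_on_span[OF lin zB that])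
    qed
    have z2: "phi y = 0" if "y \<in> ?S" for y
      using z B(3) span_superset[of ?S] that by blast
    have eqv: "\<forall>u\<in>Ugrp ns. \<forall>a. phi (rho u a) = \<theta> u * phi a"
    proof (intro ballI allI)
      fix u :: "'f mat" and a assume "u \<in> Ugrp ns"
      hence "phi (rho u a - smul (\<theta> u) a) = 0" using z2 by blast
      thus "phi (rho u a) = \<theta> u * phi a"
        using vp.linear_diff[OF lin] vp.linear_scale[OF lin] by simp
    qed
    have "phi x = 1" using ph by simp
    hence "phi \<noteq> (\<lambda>_. 0)" by auto
    thus "\<exists>phi. Vector_Spaces.linear smul (*) phi \<and> (\<forall>u\<in>Ugrp ns. \<forall>a. phi (rho u a) = \<theta> u * phi a) \<and> phi \<noteq> (\<lambda>_. 0)"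
      using lin eqv by blast
  qed
qed


theorem proposition4p12:
  fixes absv :: "'f::field \<Rightarrow> real" and p :: nat
    and ns :: "nat list"
    and smul :: "'k::field \<Rightarrow> 'e::ab_group_add \<Rightarrow> 'e"
    and rho :: "'f mat \<Rightarrow> 'e \<Rightarrow> 'e"
    and \<theta> :: "'f mat \<Rightarrow> 'k"
  assumes F: "nonarch_local_field absv p"
    and k: "alg_closed_field TYPE('k)" and char: "CHAR('k) \<noteq> p"
    and ns: "ns \<noteq> []" "\<forall>n_i \<in> set ns. n_i > 0"
    and tau: "smooth_rep absv ns smul rho"
    and theta: "smooth_char_U absv ns \<theta>" "nondegenerate ns \<theta>"
  shows "(derivative_nonzero ns smul rho \<theta> \<longleftrightarrow> hom_U_nonzero ns smul rho \<theta>) \<and>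
         (hom_U_nonzero ns smul rho \<theta> \<longleftrightarrow> coinvariants_nonzero ns smul rho \<theta>)"
proof -
  have vs: "vector_space smul"
    and rmul: "\<forall>g \<in> Mprime ns. \<forall>h \<in> Mprime ns. rho (g * h) = rho g \<circ> rho h"
    and rone: "rho (1\<^sub>m (sum_list ns)) = id"
    using tau unfolding smooth_rep_def by auto
  have tnz: "\<forall>u \<in> Ugrp ns. \<theta> u \<noteq> 0"
    and tmul: "\<forall>u \<in> Ugrp ns. \<forall>v \<in> Ugrp ns. \<theta> (u * v) = \<theta> u * \<theta> v"
    using theta(1) unfolding smooth_char_U_def by auto
  interpret vector_space smul by (rule vs)
  have K0: "span {0} = {0}" by simp
  have "deriv_kernel smul rho \<theta> {0} (Nlist ns)
     = span ({0} \<union> {rho g a - smul (\<theta> g) a | g a. \<exists>G\<in>set (Nlist ns). g \<in> G})"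
    by (rule deriv_kernel_span[OF vs K0])
  also have "\<dots> = span {rho g a - smul (\<theta> g) a | g a. \<exists>G\<in>set (Nlist ns). g \<in> G}"
    by simp
  also have "\<dots> = span {rho u a - smul (\<theta> u) a | u a. u \<in> Ugrp ns}"
    by (rule span_gen[OF vs rmul rone tnz tmul, symmetric])
  finally have "derivative_nonzero ns smul rho \<theta> \<longleftrightarrow> coinvariants_nonzero ns smul rho \<theta>"
    unfolding derivative_nonzero_def coinvariants_nonzero_def by simp
  moreover have "hom_U_nonzero ns smul rho \<theta> \<longleftrightarrow> coinvariants_nonzero ns smul rho \<theta>"
    by (rule hom_iff[OF vs])
  ultimately show ?thesis by simp
qed

end
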